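(* For every integer $n\ge1$, $\Omega'_n=\Omega_n$.
   Context: $V_n=\{(v_0,v_1,v_2)\in\mathbb{Z}^3: 0\le v_0\le v_1\le 1,\ v_1\le v_2\le n+1\}$, elements written as words $v_0v_1v_2$. A Wang tile is $t=(a,b,c,d)$ with $\mathrm{RIGHT}(t)=a$, $\mathrm{TOP}(t)=b$, $\mathrm{LEFT}(t)=c$, $\mathrm{BOTTOM}(t)=d$; $\hat t=(b,a,d,c)$, $\hat S=\{\hat t:t\in S\}$. Define (as (right, top, left, bottom)): $W_n=\{(11(i+1),11(j+1),11i,11j):1\le i,j\le n\}$; $b_n^i=(00(i+1),111,00i,11n)$, $B'_n=\{b_n^i:0\le i\le n\}$, $B_n=\{b_n^i:0\le i\le n-1\}$; $G_n=\{(01(i+1),111,00i,11(n+1)):0\le i\le n\}$; $Y_n=\{(01(i+1),112,01i,11(n+1)):1\le i\le n\}$; $A_n=\{(00(i+1),112,01i,11n):1\le i\le n\}$; $j_n^{k,l,r,s}=((0,k,l),(0,r,s),(0,s,r+n),(0,l,k+n))$ for $(k,l),(r,s)\in\{(0,0),(0,1),(1,1)\}$; $J'_n$ is the set of these 9 tiles and $J_n=J'_n\setminus\{j_n^{0,0,1,1},j_n^{1,1,0,0}\}$. $\mathcal T'_n=W_n\cup B'_n\cup G_n\cup Y_n\cup A_n\cup\hat B'_n\cup\hat G_n\cup\hat Y_n\cup\hat A_n\cup J'_n$ and $\mathcal T_n=W_n\cup B_n\cup G_n\cup Y_n\cup\hat B_n\cup\hat G_n\cup\hat Y_n\cup J_n$.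 $\Omega'_n$ (resp. $\Omega_n$) is the set of configurations $x:\mathbb Z^2\to\mathcal T'_n$ (resp. $\mathcal T_n$) with $\mathrm{RIGHT}(x(\mathbf m))=\mathrm{LEFT}(x(\mathbf m+\mathbf e_1))$ and $\mathrm{TOP}(x(\mathbf m))=\mathrm{BOTTOM}(x(\mathbf m+\mathbf e_2))$ for all $\mathbf m\in\mathbb Z^2$. *)

theory Defs
  imports Main
begin

text \<open>Colors are triples (v0,v1,v2) of integers, a word v0v1v2.
  A Wang tile is (right, top, left, bottom).\<close>
type_synonym color = "int \<times> int \<times> int"
type_synonym tile = "color \<times> color \<times> color \<times> color"

definition RIGHT :: "tile \<Rightarrow> color" where "RIGHT t = (case t of (a,b,c,d) \<Rightarrow> a)"
definition TOP :: "tile \<Rightarrow> color" where "TOP t = (case t of (a,b,c,d) \<Rightarrow> b)"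
definition LEFT :: "tile \<Rightarrow> color" where "LEFT t = (case t of (a,b,c,d) \<Rightarrow> c)"
definition BOTTOM :: "tile \<Rightarrow> color" where "BOTTOM t = (case t of (a,b,c,d) \<Rightarrow> d)"

definition hat :: "tile \<Rightarrow> tile" where "hat t = (case t of (a,b,c,d) \<Rightarrow> (b,a,d,c))"

definition hatS :: "tile set \<Rightarrow> tile set" where "hatS S = hat ` S"

definition V :: "int \<Rightarrow> color set" where
  "V n = {(v0,v1,v2). 0 \<le> v0 \<and> v0 \<le> v1 \<and> v1 \<le> 1 \<and> v1 \<le> v2 \<and> v2 \<le> n + 1}"

definition W :: "int \<Rightarrow> tile set" where
  "W n = {((1,1,i+1),(1,1,j+1),(1,1,i),(1,1,j)) | i j. 1 \<le> i \<and> i \<le> n \<and> 1 \<le> j \<and> j \<le> n}"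

definition btile :: "int \<Rightarrow> int \<Rightarrow> tile" where
  "btile n i = ((0,0,i+1),(1,1,1),(0,0,i),(1,1,n))"

definition B' :: "int \<Rightarrow> tile set" where "B' n = {btile n i | i. 0 \<le> i \<and> i \<le> n}"
definition B :: "int \<Rightarrow> tile set" where "B n = {btile n i | i. 0 \<le> i \<and> i \<le> n - 1}"

definition G :: "int \<Rightarrow> tile set" where
  "G n = {((0,1,i+1),(1,1,1),(0,0,i),(1,1,n+1)) | i. 0 \<le> i \<and> i \<le> n}"

definition Y :: "int \<Rightarrow> tile set" where
  "Y n = {((0,1,i+1),(1,1,2),(0,1,i),(1,1,n+1)) | i. 1 \<le> i \<and> i \<le> n}"

definition A :: "int \<Rightarrow> tile set" where
  "A n = {((0,0,i+1),(1,1,2),(0,1,i),(1,1,n)) | i. 1 \<le> i \<and> i \<le> n}"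

definition jtile :: "int \<Rightarrow> int \<Rightarrow> int \<Rightarrow> int \<Rightarrow> int \<Rightarrow> tile" where
  "jtile n k l r s = ((0,k,l),(0,r,s),(0,s,r+n),(0,l,k+n))"

definition Jpairs :: "(int \<times> int) set" where "Jpairs = {(0,0),(0,1),(1,1)}"

definition J' :: "int \<Rightarrow> tile set" where
  "J' n = {jtile n k l r s | k l r s. (k,l) \<in> Jpairs \<and> (r,s) \<in> Jpairs}"

definition J :: "int \<Rightarrow> tile set" where
  "J n = J' n - {jtile n 0 0 1 1, jtile n 1 1 0 0}"

definition T' :: "int \<Rightarrow> tile set" where
  "T' n = W n \<union> B' n \<union> G n \<union> Y n \<union> A n \<union> hatS (B' n) \<union> hatS (G n) \<union> hatS (Y n)
          \<union> hatS (A n) \<union> J' n"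

definition T :: "int \<Rightarrow> tile set" where
  "T n = W n \<union> B n \<union> G n \<union> Y n \<union> hatS (B n) \<union> hatS (G n) \<union> hatS (Y n) \<union> J n"

definition Omega :: "tile set \<Rightarrow> (int \<times> int \<Rightarrow> tile) set" where
  "Omega S = {x. (\<forall>m. x m \<in> S) \<and>
     (\<forall>a b. RIGHT (x (a,b)) = LEFT (x (a+1,b)) \<and> TOP (x (a,b)) = BOTTOM (x (a,b+1)))}"

end

theory Submission
  imports Defs
begin


definition c1 :: "color \<Rightarrow> int" where "c1 c = fst c"
definition c2 :: "color \<Rightarrow> int" where "c2 c = fst (snd c)"
definition c3 :: "color \<Rightarrow> int" where "c3 c = snd (snd c)"

lemma T'_cases:
  assumes "t \<in> T' n"
  shows "(\<exists>i j. 1 \<le> i \<and> i \<le> n \<and> 1 \<le> j \<and> j \<le> n \<and> t = ((1,1,i+1),(1,1,j+1),(1,1,i),(1,1,j)))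
   \<or> (\<exists>i. 0 \<le> i \<and> i \<le> n \<and> t = ((0,0,i+1),(1,1,1),(0,0,i),(1,1,n)))
   \<or> (\<exists>i. 0 \<le> i \<and> i \<le> n \<and> t = ((0,1,i+1),(1,1,1),(0,0,i),(1,1,n+1)))
   \<or> (\<exists>i. 1 \<le> i \<and> i \<le> n \<and> t = ((0,1,i+1),(1,1,2),(0,1,i),(1,1,n+1)))
   \<or> (\<exists>i. 1 \<le> i \<and> i \<le> n \<and> t = ((0,0,i+1),(1,1,2),(0,1,i),(1,1,n)))
   \<or> (\<exists>i. 0 \<le> i \<and> i \<le> n \<and> t = ((1,1,1),(0,0,i+1),(1,1,n),(0,0,i)))
   \<or> (\<exists>i. 0 \<le> i \<and> i \<le> n \<and> t = ((1,1,1),(0,1,i+1),(1,1,n+1),(0,0,i)))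
   \<or> (\<exists>i. 1 \<le> i \<and> i \<le> n \<and> t = ((1,1,2),(0,1,i+1),(1,1,n+1),(0,1,i)))
   \<or> (\<exists>i. 1 \<le> i \<and> i \<le> n \<and> t = ((1,1,2),(0,0,i+1),(1,1,n),(0,1,i)))
   \<or> (\<exists>k l r s. (k,l) \<in> {(0,0),(0,1),(1,1)} \<and> (r,s) \<in> {(0,0),(0,1),(1,1)} \<and>
        t = ((0,k,l),(0,r,s),(0,s,r+n),(0,l,k+n)))"
  using assms
  unfolding T'_def W_def B'_def btile_def G_def Y_def A_def hatS_def hat_def J'_def jtile_def Jpairs_def
  by auto

lemmas tdefs = RIGHT_def TOP_def LEFT_def BOTTOM_def c1_def c2_def c3_def

lemma TF1:
  assumes "t \<in> T' n" "1 \<le> n"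
  shows "c1 (LEFT t) = c1 (RIGHT t)" "c1 (TOP t) = c1 (BOTTOM t)"
    "c1 (LEFT t) = 0 \<or> c1 (LEFT t) = 1" "c1 (BOTTOM t) = 0 \<or> c1 (BOTTOM t) = 1"
    "0 \<le> c3 (LEFT t)" "c3 (LEFT t) \<le> n+1" "0 \<le> c3 (RIGHT t)" "c3 (RIGHT t) \<le> n+1"
    "0 \<le> c3 (TOP t)" "c3 (TOP t) \<le> n+1" "0 \<le> c3 (BOTTOM t)" "c3 (BOTTOM t) \<le> n+1"
  using T'_cases[OF assms(1)] assms(2) by (elim disjE exE conjE; auto simp: tdefs)+

lemma TF2: "t \<in> T' n \<Longrightarrow> c1 (LEFT t) = 1 \<Longrightarrow> c3 (TOP t) = c3 (BOTTOM t) + 1"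
  by (drule T'_cases, elim disjE exE conjE; auto simp: tdefs)
lemma TF3: "t \<in> T' n \<Longrightarrow> c1 (BOTTOM t) = 1 \<Longrightarrow> c3 (RIGHT t) = c3 (LEFT t) + 1"
  by (drule T'_cases, elim disjE exE conjE; auto simp: tdefs)
lemma TF5: "t \<in> T' n \<Longrightarrow> c1 (LEFT t) = 0 \<Longrightarrow> c1 (BOTTOM t) = 0 \<Longrightarrow> c3 (TOP t) \<le> 1 \<and> n \<le> c3 (BOTTOM t)"
  by (drule T'_cases, elim disjE exE conjE; auto simp: tdefs)
lemma TF6: "t \<in> T' n \<Longrightarrow> c1 (LEFT t) = 0 \<Longrightarrow> c1 (BOTTOM t) = 1 \<Longrightarrow> n \<le> c3 (BOTTOM t)"
  by (drule T'_cases, elim disjE exE conjE; auto simp: tdefs)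
lemma TF7: "t \<in> T' n \<Longrightarrow> 1 \<le> n \<Longrightarrow> c1 (TOP t) = 1 \<Longrightarrow> 1 \<le> c3 (TOP t)"
  by (drule T'_cases, elim disjE exE conjE; auto simp: tdefs)
lemma SA: "t \<in> A n \<Longrightarrow> TOP t = (1,1,2) \<and> c1 (BOTTOM t) = 1 \<and> (\<exists>i. 1 \<le> i \<and> i \<le> n \<and> RIGHT t = (0,0,i+1))"
  unfolding A_def by (auto simp: tdefs)
lemma S1: "t \<in> T' n \<Longrightarrow> LEFT t = (0,0,c) \<Longrightarrow> 1 \<le> c \<Longrightarrow>
   (c1 (TOP t) = 1 \<and> c3 (TOP t) = 1) \<or> (c1 (TOP t) = 0 \<and> c3 (TOP t) = 0)"
  by (drule T'_cases, elim disjE exE conjE; auto simp: tdefs)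
lemma S2: "t \<in> T' n \<Longrightarrow> c1 (LEFT t) = 0 \<Longrightarrow> c1 (BOTTOM t) = 1 \<Longrightarrow> c3 (BOTTOM t) = n+1 \<Longrightarrow> c2 (RIGHT t) = 1"
  by (drule T'_cases, elim disjE exE conjE; auto simp: tdefs)
lemma S3: "t \<in> T' n \<Longrightarrow> c1 (LEFT t) = 0 \<Longrightarrow> c2 (LEFT t) = 1 \<Longrightarrow> c1 (BOTTOM t) = 1 \<Longrightarrow> c3 (BOTTOM t) = n \<Longrightarrow> t \<in> A n"
  by (drule T'_cases, elim disjE exE conjE; auto simp: tdefs A_def)
lemma S4: "t \<in> T' n \<Longrightarrow> 1 \<le> n \<Longrightarrow> LEFT t = (0,0,n+1) \<Longrightarrow> False"
  by (drule T'_cases, elim disjE exE conjE; auto simp: tdefs)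
lemma S5: "t \<in> T' n \<Longrightarrow> 1 \<le> n \<Longrightarrow> TOP t = (0,1,n+1) \<Longrightarrow> LEFT t = (1,1,n+1)"
  by (drule T'_cases, elim disjE exE conjE; auto simp: tdefs)
lemma S6: "t \<in> T' n \<Longrightarrow> 1 \<le> n \<Longrightarrow> RIGHT t = (0,0,n) \<Longrightarrow> (c1 (BOTTOM t) = 1 \<and> c3 (BOTTOM t) = n) \<or> (n = 1 \<and> BOTTOM t = (0,1,1))"
  by (drule T'_cases, elim disjE exE conjE; auto simp: tdefs)
lemma S7: "t \<in> T' n \<Longrightarrow> n = 1 \<Longrightarrow> RIGHT t = (1,1,2) \<Longrightarrow> TOP t = (0,1,1) \<Longrightarrow> False"
  by (drule T'_cases, elim disjE exE conjE; auto simp: tdefs)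

lemma hat_hat: "hat (hat t) = t" by (auto simp: hat_def split: prod.splits)

lemma hat_W: "t \<in> W n \<Longrightarrow> hat t \<in> W n"
  unfolding W_def hat_def by auto
lemma hat_J: "t \<in> J' n \<Longrightarrow> hat t \<in> J' n"
  unfolding J'_def hat_def jtile_def by fastforce
lemma hat_hatS: "t \<in> hatS S \<Longrightarrow> hat t \<in> S"
  unfolding hatS_def using hat_hat by auto
lemma hat_inS: "t \<in> S \<Longrightarrow> hat t \<in> hatS S"
  unfolding hatS_def by auto
lemma hat_T': "t \<in> T' n \<Longrightarrow> hat t \<in> T' n"
  unfolding T'_def using hat_W hat_J hat_hatS hat_inS by blast



lemma V_in: "x \<in> Omega S \<Longrightarrow> x m \<in> S" unfolding Omega_def by (cases m) auto
lemma V_h: "x \<in> Omega S \<Longrightarrow> RIGHT (x (a,b)) = LEFT (x (a+1,b))" unfolding Omega_def by auto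
lemma V_v: "x \<in> Omega S \<Longrightarrow> TOP (x (a,b)) = BOTTOM (x (a,b+1))" unfolding Omega_def by auto

lemma int_shift_const:
  fixes f :: "int \<Rightarrow> int"
  assumes "\<And>y. f (y+1) = f y"
  shows "f y = f z"
proof -
  have *: "f (b + int k) = f b" for b k
  proof (induction k)
    case (Suc k)
    have "b + int (Suc k) = (b + int k) + 1" by simp
    then show ?case using Suc assms by metis
  qed simp
  show ?thesis
  proof (cases "y \<le> z")
    case True
    then show ?thesis using *[of y "nat (z-y)"] by simp
  next
    case False
    then show ?thesis using *[of z "nat (y-z)"] by simp
  qed
qed

lemma colinv:
  assumes "x \<in> Omega (T' n)" "1 \<le> n"
  shows "c1 (BOTTOM (x (a,b))) = c1 (BOTTOM (x (a,b')))"
proof -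
  have "c1 (BOTTOM (x (a,y+1))) = c1 (BOTTOM (x (a,y)))" for y
    using V_v[OF assms(1), of a y] TF1(2)[OF V_in[OF assms(1)] assms(2), of "(a,y)"] by simp
  then show ?thesis using int_shift_const[of "\<lambda>y. c1 (BOTTOM (x (a,y)))"] by blast
qed

lemma rowinv:
  assumes "x \<in> Omega (T' n)" "1 \<le> n"
  shows "c1 (LEFT (x (a,b))) = c1 (LEFT (x (a',b)))"
proof -
  have "c1 (LEFT (x (y+1,b))) = c1 (LEFT (x (y,b)))" for y
    using V_h[OF assms(1), of y b] TF1(1)[OF V_in[OF assms(1)] assms(2), of "(y,b)"] by simp
  then show ?thesis using int_shift_const[of "\<lambda>y. c1 (LEFT (x (y,b)))"] by blast
qed

lemma vchain:
  assumes "x \<in> Omega (T' n)"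
  shows "(\<forall>d::nat. 1 \<le> d \<and> d \<le> k \<longrightarrow> c1 (LEFT (x (a,b+int d))) = 1) \<Longrightarrow>
     c3 (BOTTOM (x (a,b+int k+1))) = c3 (TOP (x (a,b))) + int k"
proof (induction k)
  case 0
  then show ?case using V_v[OF assms, of a b] by simp
next
  case (Suc k)
  have e: "b + int (Suc k) = b+int k+1" by simp
  have "c1 (LEFT (x (a,b+int k+1))) = 1"
    unfolding e[symmetric] using Suc.prems by auto
  then have "c3 (TOP (x (a,b+int k+1))) = c3 (BOTTOM (x (a,b+int k+1))) + 1"
    using TF2[OF V_in[OF assms]] by blast
  moreover have "BOTTOM (x (a,b+int (Suc k)+1)) = TOP (x (a,b+int k+1))"
    using V_v[OF assms, of a "b+int k+1"] e by simp
  ultimately show ?case using Suc by simp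
qed

lemma hchain:
  assumes "x \<in> Omega (T' n)"
  shows "(\<forall>d::nat. d < k \<longrightarrow> c1 (BOTTOM (x (a+int d,b))) = 1) \<Longrightarrow>
     c3 (LEFT (x (a+int k,b))) = c3 (LEFT (x (a,b))) + int k"
proof (induction k)
  case 0
  then show ?case by simp
next
  case (Suc k)
  have "c3 (RIGHT (x (a+int k,b))) = c3 (LEFT (x (a+int k,b))) + 1"
    using TF3[OF V_in[OF assms]] Suc.prems[rule_format, of k] by simp
  moreover have "LEFT (x (a+int (Suc k),b)) = RIGHT (x (a+int k,b))"
    using V_h[OF assms, of "a+int k" b] by (metis add.assoc of_nat_Suc add.commute)
  ultimately show ?case using Suc by simp
qed



lemma c1_01: "x \<in> Omega (T' n) \<Longrightarrow> 1 \<le> n \<Longrightarrow> c1 (LEFT (x m)) \<noteq> 0 \<Longrightarrow> c1 (LEFT (x m)) = 1"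
  using TF1(3)[OF V_in] by blast

lemma Astep:
  assumes x: "x \<in> Omega (T' n)" and n: "1 \<le> n" and A: "x (a,b) \<in> A n"
  shows "c1 (BOTTOM (x (a+1,b))) = 1 \<and> x (a+1,b+n) \<in> A n"
proof -
  obtain i where top: "TOP (x (a,b)) = (1,1,2)" and bot1: "c1 (BOTTOM (x (a,b))) = 1"
    and i: "1 \<le> i" "i \<le> n" and rt: "RIGHT (x (a,b)) = (0,0,i+1)"
    using SA[OF A] by blast
  have lt1: "LEFT (x (a+1,b)) = (0,0,i+1)" using rt V_h[OF x, of a b] by simp
  have ex: "\<exists>d::nat. 1 \<le> d \<and> c1 (LEFT (x (a,b+int d))) = 0"
  proof (rule ccontr)
    assume "\<not> ?thesis"
    then have "\<forall>d::nat. 1 \<le> d \<and> d \<le> nat n \<longrightarrow> c1 (LEFT (x (a,b+int d))) = 1"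
      using c1_01[OF x n] by blast
    from vchain[OF x this] have "c3 (BOTTOM (x (a,b+int (nat n)+1))) = 2 + int (nat n)"
      using top by (simp add: c3_def)
    moreover have "c3 (BOTTOM (x (a,b+int (nat n)+1))) \<le> n+1" using TF1(12)[OF V_in[OF x] n] by blast
    ultimately show False using n by simp
  qed
  define d0 where "d0 = (LEAST d::nat. 1 \<le> d \<and> c1 (LEFT (x (a,b+int d))) = 0)"
  have d0: "1 \<le> d0" "c1 (LEFT (x (a,b+int d0))) = 0"
    using LeastI_ex[OF ex] unfolding d0_def[symmetric] by auto
  have below: "c1 (LEFT (x (a,b+int d))) = 1" if "1 \<le> d" "d < d0" for d
    using not_less_Least[of d "\<lambda>d::nat. 1 \<le> d \<and> c1 (LEFT (x (a,b+int d))) = 0"] that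
      c1_01[OF x n] unfolding d0_def[symmetric] by blast
  define k where "k = d0 - 1"
  have kd: "b + int k + 1 = b + int d0" using d0 k_def by simp
  have pk: "\<forall>d::nat. 1 \<le> d \<and> d \<le> k \<longrightarrow> c1 (LEFT (x (a,b+int d))) = 1"
    using below k_def by auto
  have colA: "c3 (BOTTOM (x (a,b+int d0))) = 2 + int k"
    using vchain[OF x pk] top kd by (simp add: c3_def)
  have colA1: "c1 (BOTTOM (x (a,b+int d0))) = 1" using colinv[OF x n] bot1 by metis
  have bnd: "n \<le> 2 + int k" "2 + int k \<le> n + 1"
    using TF6[OF V_in[OF x] d0(2) colA1] TF1(12)[OF V_in[OF x] n, of "(a,b+int d0)"] colA by auto
  have pk1: "\<forall>d::nat. 1 \<le> d \<and> d \<le> k \<longrightarrow> c1 (LEFT (x (a+1,b+int d))) = 1"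
  proof (intro allI impI)
    fix d :: nat assume "1 \<le> d \<and> d \<le> k"
    then have "c1 (LEFT (x (a,b+int d))) = 1" using pk by blast
    then show "c1 (LEFT (x (a+1,b+int d))) = 1"
      using V_h[OF x, of a "b+int d"] TF1(1)[OF V_in[OF x] n, of "(a,b+int d)"] by simp
  qed
  have colB: "c3 (BOTTOM (x (a+1,b+int d0))) = c3 (TOP (x (a+1,b))) + int k"
    using vchain[OF x pk1] kd by simp
  have l0: "c1 (LEFT (x (a+1,b+int d0))) = 0"
    using V_h[OF x, of a "b+int d0"] TF1(1)[OF V_in[OF x] n, of "(a,b+int d0)"] d0(2) by simp
  have cB: "c1 (BOTTOM (x (a+1,b+int d0))) = c1 (TOP (x (a+1,b)))"
    using colinv[OF x n] TF1(2)[OF V_in[OF x] n] by metis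
  from S1[OF V_in[OF x] lt1] i
  consider "c1 (TOP (x (a+1,b))) = 1" "c3 (TOP (x (a+1,b))) = 1"
    | "c1 (TOP (x (a+1,b))) = 0" "c3 (TOP (x (a+1,b))) = 0" by auto
  then show ?thesis
  proof cases
    case 1
    have "n \<le> 1 + int k" using TF6[OF V_in[OF x] l0] cB 1 colB by simp
    then have kn: "int k = n - 1" "int d0 = n" using bnd kd by auto
    have "c2 (RIGHT (x (a,b+int d0))) = 1"
      using S2[OF V_in[OF x] d0(2) colA1] colA kn by simp
    then have "c2 (LEFT (x (a+1,b+int d0))) = 1" using V_h[OF x, of a "b+int d0"] by simp
    then have "x (a+1,b+int d0) \<in> A n"
      using S3[OF V_in[OF x] l0] cB 1 colB kn by simp
    then show ?thesis using 1 kn cB colA1 colinv[OF x n] by (metis TF1(2)[OF V_in[OF x] n])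
  next
    case 2
    have "n \<le> int k" using TF5[OF V_in[OF x] l0] cB 2 colB by simp
    then show ?thesis using bnd by simp
  qed
qed

lemma Amain:
  assumes x: "x \<in> Omega (T' n)" and n: "1 \<le> n"
  shows "\<forall>a b. x (a,b) \<in> A n \<longrightarrow> c1 (BOTTOM (x (a + int m + 1, b))) = 0 \<longrightarrow> False"
proof (induction m)
  case 0
  then show ?case using Astep[OF x n] by auto
next
  case (Suc m)
  show ?case
  proof (intro allI impI)
    fix a b assume A: "x (a,b) \<in> A n" and c: "c1 (BOTTOM (x (a + int (Suc m) + 1, b))) = 0"
    have A1: "x (a+1,b+n) \<in> A n" using Astep[OF x n A] by blast
    have "c1 (BOTTOM (x ((a+1) + int m + 1, b+n))) = c1 (BOTTOM (x (a + int (Suc m) + 1, b)))"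
      using colinv[OF x n] by (simp add: ac_simps)
    then show False using Suc.IH A1 c by metis
  qed
qed

lemma noA:
  assumes x: "x \<in> Omega (T' n)" and n: "1 \<le> n"
  shows "x (a,b) \<notin> A n"
proof
  assume A: "x (a,b) \<in> A n"
  have ex: "\<exists>d::nat. c1 (BOTTOM (x (a+int d,b))) = 0"
  proof (rule ccontr)
    assume "\<not> ?thesis"
    then have "\<forall>d::nat. d < nat n + 2 \<longrightarrow> c1 (BOTTOM (x (a+int d,b))) = 1"
      using TF1(4)[OF V_in[OF x] n] by blast
    from hchain[OF x this] have "c3 (LEFT (x (a+int (nat n + 2),b))) = c3 (LEFT (x (a,b))) + int (nat n + 2)" .
    moreover have "0 \<le> c3 (LEFT (x (a,b)))" "c3 (LEFT (x (a+int (nat n + 2),b))) \<le> n+1"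
      using TF1(5,6)[OF V_in[OF x] n] by blast+
    ultimately show False using n by simp
  qed
  then obtain d :: nat where d: "c1 (BOTTOM (x (a+int d,b))) = 0" by blast
  have "d \<noteq> 0" using d SA[OF A] by (cases d) auto
  then obtain m where "d = Suc m" by (cases d) auto
  then have "c1 (BOTTOM (x (a + int m + 1,b))) = 0" using d by (simp add: ac_simps)
  then show False using Amain[OF x n, of m] A by blast
qed



lemma noJ:
  assumes x: "x \<in> Omega (T' n)" and n: "1 \<le> n"
  shows "x (a,b) \<noteq> jtile n 1 1 0 0"
proof
  assume J: "x (a,b) = jtile n 1 1 0 0"
  have botJ: "BOTTOM (x (a,b)) = (0,1,n+1)" and lJ: "LEFT (x (a,b)) = (0,0,n)"
    using J by (auto simp: jtile_def BOTTOM_def LEFT_def)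
  have r1: "RIGHT (x (a-1,b)) = (0,0,n)" using V_h[OF x, of "a-1" b] lJ by simp
  have "TOP (x (a,b-1)) = (0,1,n+1)" using V_v[OF x, of a "b-1"] botJ by simp
  then have "LEFT (x (a,b-1)) = (1,1,n+1)" using S5[OF V_in[OF x] n] by blast
  then have r2: "RIGHT (x (a-1,b-1)) = (1,1,n+1)" using V_h[OF x, of "a-1" "b-1"] by simp
  have t2: "TOP (x (a-1,b-1)) = BOTTOM (x (a-1,b))" using V_v[OF x, of "a-1" "b-1"] by simp
  from S6[OF V_in[OF x] n r1]
  consider "n = 1" "BOTTOM (x (a-1,b)) = (0,1,1)"
    | "c1 (BOTTOM (x (a-1,b))) = 1" "c3 (BOTTOM (x (a-1,b))) = n" by blast
  then show False
  proof cases
    case 1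
    then show False using S7[OF V_in[OF x] 1(1)] r2 t2 by auto
  next
    case 2
    have ex: "\<exists>d::nat. 1 \<le> d \<and> c1 (LEFT (x (a,b-int d))) = 0"
    proof (rule ccontr)
      assume "\<not> ?thesis"
      then have hyp: "\<forall>d::nat. 1 \<le> d \<longrightarrow> c1 (LEFT (x (a,b-int d))) = 1"
        using c1_01[OF x n] by blast
      define k where "k = nat n + 2"
      have "\<forall>d::nat. 1 \<le> d \<and> d \<le> k \<longrightarrow> c1 (LEFT (x (a,(b - int k - 1)+int d))) = 1"
      proof (intro allI impI)
        fix d :: nat assume "1 \<le> d \<and> d \<le> k"
        then have "b - int k - 1 + int d = b - int (k + 1 - d)" "1 \<le> k + 1 - d" by auto
        then show "c1 (LEFT (x (a,(b - int k - 1)+int d))) = 1" using hyp by metis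
      qed
      from vchain[OF x this] have "c3 (BOTTOM (x (a,b))) = c3 (TOP (x (a,b - int k - 1))) + int k"
        by simp
      moreover have "0 \<le> c3 (TOP (x (a,b - int k - 1)))" using TF1(9)[OF V_in[OF x] n] by blast
      ultimately show False using botJ k_def n by (simp add: c3_def)
    qed
    define d0 where "d0 = (LEAST d::nat. 1 \<le> d \<and> c1 (LEFT (x (a,b-int d))) = 0)"
    have d0: "1 \<le> d0" "c1 (LEFT (x (a,b-int d0))) = 0"
      using LeastI_ex[OF ex] unfolding d0_def[symmetric] by auto
    have below: "c1 (LEFT (x (a,b-int d))) = 1" if "1 \<le> d" "d < d0" for d
      using not_less_Least[of d "\<lambda>d::nat. 1 \<le> d \<and> c1 (LEFT (x (a,b-int d))) = 0"] that
        c1_01[OF x n] unfolding d0_def[symmetric] by blast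
    define k where "k = d0 - 1"
    define b' where "b' = b - int d0"
    have kd: "b' + int k + 1 = b" using d0 k_def b'_def by simp
    have pk: "\<forall>d::nat. 1 \<le> d \<and> d \<le> k \<longrightarrow> c1 (LEFT (x (a,b'+int d))) = 1"
    proof (intro allI impI)
      fix d :: nat assume "1 \<le> d \<and> d \<le> k"
      then have "b' + int d = b - int (d0 - d)" "1 \<le> d0 - d" "d0 - d < d0" using k_def b'_def d0 by auto
      then show "c1 (LEFT (x (a,b'+int d))) = 1" using below by metis
    qed
    have pk1: "\<forall>d::nat. 1 \<le> d \<and> d \<le> k \<longrightarrow> c1 (LEFT (x (a-1,b'+int d))) = 1"
    proof (intro allI impI)
      fix d :: nat assume "1 \<le> d \<and> d \<le> k"
      then have "c1 (LEFT (x (a,b'+int d))) = 1" using pk by blast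
      then show "c1 (LEFT (x (a-1,b'+int d))) = 1"
        using V_h[OF x, of "a-1" "b'+int d"] TF1(1)[OF V_in[OF x] n, of "(a-1,b'+int d)"] by simp
    qed
    have colA: "c3 (BOTTOM (x (a,b))) = c3 (TOP (x (a,b'))) + int k"
      using vchain[OF x pk] kd by simp
    have l0: "c1 (LEFT (x (a,b'))) = 0" using d0 b'_def by simp
    have cb0: "c1 (BOTTOM (x (a,b'))) = 0" using colinv[OF x n, of a b' b] botJ by (simp add: c1_def)
    have "c3 (TOP (x (a,b'))) \<le> 1" using TF5[OF V_in[OF x] l0 cb0] by blast
    then have kn: "n \<le> int k" using colA botJ by (simp add: c3_def)
    have colB: "c3 (BOTTOM (x (a-1,b))) = c3 (TOP (x (a-1,b'))) + int k"
      using vchain[OF x pk1] kd by simp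
    have "c1 (TOP (x (a-1,b'))) = 1"
      using colinv[OF x n, of "a-1" b' b] 2 TF1(2)[OF V_in[OF x] n, of "(a-1,b')"] by simp
    then have "1 \<le> c3 (TOP (x (a-1,b')))" using TF7[OF V_in[OF x] n] by blast
    then show False using colB 2 kn by simp
  qed
qed

definition transp :: "(int \<times> int \<Rightarrow> tile) \<Rightarrow> (int \<times> int \<Rightarrow> tile)" where
  "transp x = (\<lambda>(a,b). hat (x (b,a)))"

lemma hat_sides: "RIGHT (hat t) = TOP t" "TOP (hat t) = RIGHT t" "LEFT (hat t) = BOTTOM t" "BOTTOM (hat t) = LEFT t"
  by (auto simp: hat_def RIGHT_def TOP_def LEFT_def BOTTOM_def split: prod.splits)

lemma transp_valid:
  assumes x: "x \<in> Omega (T' n)"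
  shows "transp x \<in> Omega (T' n)"
  unfolding Omega_def
proof (intro CollectI conjI allI)
  fix m show "transp x m \<in> T' n" using hat_T' V_in[OF x] by (cases m) (auto simp: transp_def)
next
  fix a b
  show "RIGHT (transp x (a,b)) = LEFT (transp x (a+1,b))"
    using V_v[OF x, of b a] by (simp add: transp_def hat_sides)
  show "TOP (transp x (a,b)) = BOTTOM (transp x (a,b+1))"
    using V_h[OF x, of b a] by (simp add: transp_def hat_sides)
qed

lemma hat_jtile: "hat (jtile n k l r s) = jtile n r s k l"
  by (simp add: hat_def jtile_def)

lemma good_tiles:
  assumes x: "x \<in> Omega (T' n)" and n: "1 \<le> n"
  shows "x m \<in> T n"
proof -
  obtain a b where m: "m = (a,b)" by (cases m)
  have xt: "transp x \<in> Omega (T' n)" using transp_valid[OF x] .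
  have t: "x (a,b) \<in> T' n" using V_in[OF x] .
  have nA: "x (a,b) \<notin> A n" using noA[OF x n] .
  have nhA: "x (a,b) \<notin> hatS (A n)"
  proof
    assume "x (a,b) \<in> hatS (A n)"
    then have "transp x (b,a) \<in> A n" using hat_hatS by (simp add: transp_def)
    then show False using noA[OF xt n] by blast
  qed
  have nJ1: "x (a,b) \<noteq> jtile n 1 1 0 0" using noJ[OF x n] .
  have nJ2: "x (a,b) \<noteq> jtile n 0 0 1 1"
  proof
    assume "x (a,b) = jtile n 0 0 1 1"
    then have "transp x (b,a) = jtile n 1 1 0 0" by (simp add: transp_def hat_jtile)
    then show False using noJ[OF xt n] by blast
  qed
  have nb1: "x (a,b) \<noteq> btile n n"
  proof
    assume "x (a,b) = btile n n"
    then have "LEFT (x (a+1,b)) = (0,0,n+1)" using V_h[OF x, of a b] by (simp add: btile_def RIGHT_def)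
    then show False using S4[OF V_in[OF x] n] by blast
  qed
  have nb2: "x (a,b) \<noteq> hat (btile n n)"
  proof
    assume "x (a,b) = hat (btile n n)"
    then have "transp x (b,a) = btile n n" by (simp add: transp_def hat_hat)
    then have "LEFT (transp x (b+1,a)) = (0,0,n+1)" using V_h[OF xt, of b a] by (simp add: btile_def RIGHT_def)
    then show False using S4[OF V_in[OF xt] n] by blast
  qed
  have Bsub: "s \<in> B' n \<Longrightarrow> s \<noteq> btile n n \<Longrightarrow> s \<in> B n" for s
  proof -
    assume "s \<in> B' n" "s \<noteq> btile n n"
    then obtain i where "s = btile n i" "0 \<le> i" "i \<le> n" "i \<noteq> n" unfolding B'_def by auto
    then show "s \<in> B n" unfolding B_def by auto
  qed
  have hBsub: "s \<in> hatS (B' n) \<Longrightarrow> s \<noteq> hat (btile n n) \<Longrightarrow> s \<in> hatS (B n)" for s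
    unfolding hatS_def using Bsub by blast
  have Jsub: "s \<in> J' n \<Longrightarrow> s \<noteq> jtile n 1 1 0 0 \<Longrightarrow> s \<noteq> jtile n 0 0 1 1 \<Longrightarrow> s \<in> J n" for s
    unfolding J_def by auto
  show ?thesis using t nA nhA nJ1 nJ2 nb1 nb2 Bsub hBsub Jsub unfolding m T'_def T_def by blast
qed

lemma T_sub: "T n \<subseteq> T' n"
proof -
  have "B n \<subseteq> B' n" unfolding B_def B'_def by force
  moreover have "J n \<subseteq> J' n" unfolding J_def by auto
  ultimately show ?thesis unfolding T_def T'_def hatS_def by blast
qed

theorem proposition7p4:
  fixes n :: int
  assumes "1 \<le> n"
  shows "Omega (T' n) = Omega (T n)"
proof
  show "Omega (T' n) \<subseteq> Omega (T n)"
    using good_tiles[OF _ assms] unfolding Omega_def by blast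
  show "Omega (T n) \<subseteq> Omega (T' n)"
    using T_sub unfolding Omega_def by blast
qed

end
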